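(* Let $G$ be a group, $A$ an alphabet for $G$, and $L\subset A^*$ a regular language such that $\bar L=G$ and the evaluation map $L\to G$ is finite-to-one. Then for each $g\in G$ there are only finitely many words $y\in A^*$ such that $xyz\in L$ for some $x,z\in A^*$ and $\bar y=g$.
   Context: An alphabet for $G$ is a finite set $A$ with a map $a\mapsto\bar a\in G$ whose image generates $G$ as a monoid; $w\mapsto\bar w$ denotes the induced monoid homomorphism $A^*\to G$. *)

theory Defs
  imports "HOL-Algebra.Group"
begin

definition word_eval :: "('b, 'c) monoid_scheme \<Rightarrow> ('a \<Rightarrow> 'b) \<Rightarrow> 'a list \<Rightarrow> 'b" where
  "word_eval G ev w = foldr (\<lambda>a x. ev a \<otimes>\<^bsub>G\<^esub> x) w \<one>\<^bsub>G\<^esub>"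

definition is_alphabet :: "('b, 'c) monoid_scheme \<Rightarrow> 'a set \<Rightarrow> ('a \<Rightarrow> 'b) \<Rightarrow> bool" where
  "is_alphabet G A ev \<longleftrightarrow> finite A \<and> ev ` A \<subseteq> carrier G \<and>
     carrier G \<subseteq> word_eval G ev ` lists A"

definition regular_lang :: "'a set \<Rightarrow> 'a list set \<Rightarrow> bool" where
  "regular_lang A L \<longleftrightarrow> (\<exists>(Q::nat set) q0 (\<delta>::nat \<Rightarrow> 'a \<Rightarrow> nat) F.
      finite Q \<and> q0 \<in> Q \<and> (\<forall>q\<in>Q. \<forall>a\<in>A. \<delta> q a \<in> Q) \<and> F \<subseteq> Q \<and>
      L = {w \<in> lists A. foldl \<delta> q0 w \<in> F})"

end

theory Submission
  imports Defs
begin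

lemma eval_carrier:
  assumes "monoid G" "ev ` A \<subseteq> carrier G" "w \<in> lists A"
  shows "word_eval G ev w \<in> carrier G"
  using assms(3)
proof (induction w)
  case Nil then show ?case using assms(1) by (simp add: word_eval_def monoid.one_closed)
next
  case (Cons a w) then show ?case using assms(1,2)
    by (auto simp: word_eval_def intro!: monoid.m_closed)
qed

lemma eval_append:
  assumes "monoid G" "ev ` A \<subseteq> carrier G" "u \<in> lists A" "v \<in> lists A"
  shows "word_eval G ev (u @ v) = word_eval G ev u \<otimes>\<^bsub>G\<^esub> word_eval G ev v"
  using assms(3)
proof (induction u)
  case Nil then show ?case using assms eval_carrier[OF assms(1,2,4)]
    by (simp add: word_eval_def monoid.l_one)
next
  case (Cons a u)
  have ea: "ev a \<in> carrier G" using Cons assms(2) by auto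
  have eu: "word_eval G ev u \<in> carrier G" using Cons eval_carrier[OF assms(1,2)] by auto
  have ev: "word_eval G ev v \<in> carrier G" using eval_carrier[OF assms(1,2,4)] .
  have "word_eval G ev ((a # u) @ v) = ev a \<otimes>\<^bsub>G\<^esub> word_eval G ev (u @ v)"
    by (simp add: word_eval_def)
  also have "\<dots> = ev a \<otimes>\<^bsub>G\<^esub> (word_eval G ev u \<otimes>\<^bsub>G\<^esub> word_eval G ev v)"
    using Cons by simp
  also have "\<dots> = (ev a \<otimes>\<^bsub>G\<^esub> word_eval G ev u) \<otimes>\<^bsub>G\<^esub> word_eval G ev v"
    using monoid.m_assoc[OF assms(1) ea eu ev] by simp
  also have "ev a \<otimes>\<^bsub>G\<^esub> word_eval G ev u = word_eval G ev (a # u)"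
    by (simp add: word_eval_def)
  finally show ?case .
qed

lemma foldl_Q:
  assumes "\<forall>q\<in>Q. \<forall>a\<in>A. \<delta> q a \<in> Q"
  shows "q \<in> Q \<Longrightarrow> w \<in> lists A \<Longrightarrow> foldl \<delta> q w \<in> Q"
  using assms by (induction w arbitrary: q) auto

theorem lemma3p4:
  fixes G :: "('b, 'c) monoid_scheme" and A :: "'a set" and ev :: "'a \<Rightarrow> 'b"
    and L :: "'a list set"
  assumes "group G"
    and "is_alphabet G A ev"
    and "regular_lang A L"
    and "word_eval G ev ` L = carrier G"
    and "\<forall>g\<in>carrier G. finite {w \<in> L. word_eval G ev w = g}"
  shows "\<forall>g\<in>carrier G. finite {y \<in> lists A. (\<exists>x z. x \<in> lists A \<and> z \<in> lists A \<and> x @ y @ z \<in> L)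
            \<and> word_eval G ev y = g}"
proof
  fix g assume g: "g \<in> carrier G"
  have M: "monoid G" using assms(1) by (simp add: group.is_monoid)
  have EA: "ev ` A \<subseteq> carrier G" using assms(2) by (simp add: is_alphabet_def)
  note EC = eval_carrier[OF M EA]
  note EP = eval_append[OF M EA]
  obtain Q q0 \<delta> F where fQ: "finite (Q::nat set)" and q0: "q0 \<in> Q"
    and dQ: "\<forall>q\<in>Q. \<forall>a\<in>A. \<delta> q a \<in> Q" and FQ: "F \<subseteq> Q"
    and Ld: "L = {w \<in> lists A. foldl \<delta> q0 w \<in> F}"
    using assms(3) unfolding regular_lang_def by blast
  define X where "X p = (SOME x. x \<in> lists A \<and> foldl \<delta> q0 x = p)" for p
  define Z where "Z r = (SOME z. z \<in> lists A \<and> foldl \<delta> r z \<in> F)" for r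
  define h where "h p r = word_eval G ev (X p) \<otimes>\<^bsub>G\<^esub> g \<otimes>\<^bsub>G\<^esub> word_eval G ev (Z r)" for p r
  define T where "T p r = (\<lambda>y. X p @ y @ Z r) -` {w \<in> L. word_eval G ev w = h p r}" for p r
  let ?S = "{y \<in> lists A. (\<exists>x z. x \<in> lists A \<and> z \<in> lists A \<and> x @ y @ z \<in> L)
            \<and> word_eval G ev y = g}"
  have sub: "?S \<subseteq> (\<Union>pr\<in>Q\<times>Q. T (fst pr) (snd pr))"
  proof
    fix y assume "y \<in> ?S"
    then obtain x z where y: "y \<in> lists A" and x: "x \<in> lists A" and z: "z \<in> lists A"
      and xyz: "x @ y @ z \<in> L" and gy: "word_eval G ev y = g" by blast
    define p where "p = foldl \<delta> q0 x"
    define r where "r = foldl \<delta> p y"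
    have pQ: "p \<in> Q" unfolding p_def using foldl_Q[OF dQ q0 x] .
    have rQ: "r \<in> Q" unfolding r_def using foldl_Q[OF dQ pQ y] .
    have "x \<in> lists A \<and> foldl \<delta> q0 x = p" using x p_def by simp
    hence Xp: "X p \<in> lists A \<and> foldl \<delta> q0 (X p) = p" unfolding X_def by (rule someI)
    have "z \<in> lists A \<and> foldl \<delta> r z \<in> F" using z xyz Ld p_def r_def by simp
    hence Zr: "Z r \<in> lists A \<and> foldl \<delta> r (Z r) \<in> F" unfolding Z_def by (rule someI)
    have inL: "X p @ y @ Z r \<in> L" using Xp Zr y Ld r_def by simp
    have "word_eval G ev (X p @ y @ Z r) = word_eval G ev (X p) \<otimes>\<^bsub>G\<^esub> (g \<otimes>\<^bsub>G\<^esub> word_eval G ev (Z r))"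
      using EP Xp Zr y gy by simp
    also have "\<dots> = h p r" unfolding h_def
      using monoid.m_assoc[OF M EC[of "X p"] g EC[of "Z r"]] Xp Zr by simp
    finally have "y \<in> T p r" unfolding T_def using inL by simp
    thus "y \<in> (\<Union>pr\<in>Q\<times>Q. T (fst pr) (snd pr))" using pQ rQ by force
  qed
  have fin: "finite (T p r)" if "p \<in> Q" "r \<in> Q" for p r
  proof (cases "X p \<in> lists A \<and> Z r \<in> lists A")
    case True
    have "h p r \<in> carrier G" unfolding h_def using True EC g
      by (simp add: monoid.m_closed[OF M])
    hence "finite {w \<in> L. word_eval G ev w = h p r}" using assms(5) by blast
    moreover have "inj (\<lambda>y. X p @ y @ Z r)" by (simp add: inj_def)
    ultimately show ?thesis unfolding T_def by (rule finite_vimageI)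
  next
    case False
    have "T p r = {}" unfolding T_def using False Ld by auto
    thus ?thesis by simp
  qed
  show "finite ?S"
    by (rule finite_subset[OF sub]) (use fQ fin in auto)
qed

end
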